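(* Let $\mathfrak{n}$ be the real $7$-dimensional Lie algebra with basis $e_1,\dots,e_7$ whose nonzero brackets (up to antisymmetry) are $[e_1,e_2]=e_5$, $[e_1,e_3]=e_7$, $[e_1,e_5]=e_6$, $[e_2,e_4]=e_7$, $[e_2,e_5]=e_7$. Then $\mathfrak{n}$ is an Einstein nilradical.
   Context: A real nilpotent Lie algebra $\mathfrak{n}$ is called an Einstein nilradical if it admits an inner product such that the left-invariant Riemannian metric it defines on the simply connected nilpotent Lie group with Lie algebra $\mathfrak{n}$ is a nilsoliton, i.e. its Ricci operator satisfies $\mathrm{Ric}=c\,\mathrm{Id}+D$ for some $c\in\mathbb{R}$ and some derivation $D$ of $\mathfrak{n}$. Brackets of basis elements not listed are zero. *)

theory Defs
  imports "HOL-Analysis.Analysis"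
begin

text \<open>A left-invariant metric is an inner product g
  on the Lie algebra.  The Levi-Civita connection, curvature and Ricci tensor of the
  left-invariant metric, restricted to left-invariant vector fields (which is where
  the Ricci operator of a left-invariant metric lives), are given algebraically by
  the Koszul formula, in which all derivative terms vanish.\<close>

definition inner_product_on :: "(real^'n \<Rightarrow> real^'n \<Rightarrow> real) \<Rightarrow> bool" where
  "inner_product_on g \<longleftrightarrow> bilinear g \<and> (\<forall>x y. g x y = g y x) \<and> (\<forall>x. x \<noteq> 0 \<longrightarrow> g x x > 0)"

definition lc_conn ::
  "(real^'n \<Rightarrow> real^'n \<Rightarrow> real^'n) \<Rightarrow> (real^'n \<Rightarrow> real^'n \<Rightarrow> real) \<Rightarrow> real^'n \<Rightarrow> real^'n \<Rightarrow> real^'n" where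
  "lc_conn br g X Y = (THE V. \<forall>Z. 2 * g V Z = g (br X Y) Z - g (br Y Z) X + g (br Z X) Y)"

definition curv ::
  "(real^'n \<Rightarrow> real^'n \<Rightarrow> real^'n) \<Rightarrow> (real^'n \<Rightarrow> real^'n \<Rightarrow> real) \<Rightarrow> real^'n \<Rightarrow> real^'n \<Rightarrow> real^'n \<Rightarrow> real^'n" where
  "curv br g X Y Z = lc_conn br g X (lc_conn br g Y Z) - lc_conn br g Y (lc_conn br g X Z)
                     - lc_conn br g (br X Y) Z"

definition ric_tensor ::
  "(real^'n \<Rightarrow> real^'n \<Rightarrow> real^'n) \<Rightarrow> (real^'n \<Rightarrow> real^'n \<Rightarrow> real) \<Rightarrow> real^'n \<Rightarrow> real^'n \<Rightarrow> real" where
  "ric_tensor br g X Y = (\<Sum>i\<in>UNIV. (curv br g (axis i 1) X Y) $ i)"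

definition ricci_op ::
  "(real^'n \<Rightarrow> real^'n \<Rightarrow> real^'n) \<Rightarrow> (real^'n \<Rightarrow> real^'n \<Rightarrow> real) \<Rightarrow> real^'n \<Rightarrow> real^'n" where
  "ricci_op br g X = (THE V. \<forall>Y. g V Y = ric_tensor br g X Y)"

definition is_derivation :: "(real^'n \<Rightarrow> real^'n \<Rightarrow> real^'n) \<Rightarrow> (real^'n \<Rightarrow> real^'n) \<Rightarrow> bool" where
  "is_derivation br D \<longleftrightarrow> linear D \<and> (\<forall>x y. D (br x y) = br (D x) y + br x (D y))"

definition nilsoliton ::
  "(real^'n \<Rightarrow> real^'n \<Rightarrow> real^'n) \<Rightarrow> (real^'n \<Rightarrow> real^'n \<Rightarrow> real) \<Rightarrow> bool" where
  "nilsoliton br g \<longleftrightarrow> (\<exists>(c::real) D. is_derivation br D \<and> (\<forall>X. ricci_op br g X = c *\<^sub>R X + D X))"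

definition einstein_nilradical :: "(real^'n \<Rightarrow> real^'n \<Rightarrow> real^'n) \<Rightarrow> bool" where
  "einstein_nilradical br \<longleftrightarrow> (\<exists>g. inner_product_on g \<and> nilsoliton br g)"

text \<open>Basis e_k = axis k 1 for k = 1..7 in the numeral
  type 7 (where the numeral 7 denotes the same index as 0).\<close>
definition n7_bracket :: "real^7 \<Rightarrow> real^7 \<Rightarrow> real^7" where
  "n7_bracket x y =
    (let m = (\<lambda>a b. x$a * y$b - x$b * y$a) in
     (\<chi> k. if k = 5 then m 1 2
           else if k = 6 then m 1 5
           else if k = 7 then m 1 3 + m 2 4 + m 2 5
           else 0))"

end

theory Submission
  imports Defs
begin

lemma exhaust_7:
  fixes x :: 7
  shows "x = 1 \<or> x = 2 \<or> x = 3 \<or> x = 4 \<or> x = 5 \<or> x = 6 \<or> x = 7"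
proof (induct x)
  case (of_int z)
  then have "z = 0 \<or> z = 1 \<or> z = 2 \<or> z = 3 \<or> z = 4 \<or> z = 5 \<or> z = 6" by fastforce
  then show ?case by auto
qed

lemma forall_7: "(\<forall>i::7. P i) \<longleftrightarrow> P 1 \<and> P 2 \<and> P 3 \<and> P 4 \<and> P 5 \<and> P 6 \<and> P 7"
  by (metis exhaust_7)

lemma UNIV_7: "(UNIV::7 set) = {1, 2, 3, 4, 5, 6, 7}"
  using exhaust_7 by auto

lemma sum_7: "sum f (UNIV::7 set) = f 1 + f 2 + f 3 + f 4 + f 5 + f 6 + f 7"
  unfolding UNIV_7 by (simp add: ac_simps)

lemma br_1[simp]: "n7_bracket x y $ 1 = 0" by (simp add: n7_bracket_def)
lemma br_2[simp]: "n7_bracket x y $ 2 = 0" by (simp add: n7_bracket_def)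
lemma br_3[simp]: "n7_bracket x y $ 3 = 0" by (simp add: n7_bracket_def)
lemma br_4[simp]: "n7_bracket x y $ 4 = 0" by (simp add: n7_bracket_def)
lemma br_5[simp]: "n7_bracket x y $ 5 = x$1 * y$2 - x$2 * y$1" by (simp add: n7_bracket_def)
lemma br_6[simp]: "n7_bracket x y $ 6 = x$1 * y$5 - x$5 * y$1" by (simp add: n7_bracket_def)
lemma br_7[simp]: "n7_bracket x y $ 7 = (x$1 * y$3 - x$3 * y$1) + (x$2 * y$4 - x$4 * y$2) + (x$2 * y$5 - x$5 * y$2)" by (simp add: n7_bracket_def)

definition gg :: "real^7 \<Rightarrow> real^7 \<Rightarrow> real" where
  "gg x y = 12 * (x$1 * y$1 + x$2 * y$2 + x$3 * y$3) + 4 * x$4 * y$4 + 2 * (x$4 * y$5 + x$5 * y$4) + 4 * x$5 * y$5 + x$6 * y$6 + x$7 * y$7"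

definition nab :: "real^7 \<Rightarrow> real^7 \<Rightarrow> real^7" where
  "nab x y = (\<chi> k. if k = 1 then (1/12) * x$2 * y$4 + (1/6) * x$2 * y$5 + (1/24) * x$3 * y$7 + (1/12) * x$4 * y$2 + (1/6) * x$5 * y$2 + (1/24) * x$5 * y$6 + (1/24) * x$6 * y$5 + (1/24) * x$7 * y$3 else if k = 2 then (-1/12) * x$1 * y$4 + (-1/6) * x$1 * y$5 + (-1/12) * x$4 * y$1 + (1/24) * x$4 * y$7 + (-1/6) * x$5 * y$1 + (1/24) * x$5 * y$7 + (1/24) * x$7 * y$4 + (1/24) * x$7 * y$5 else if k = 3 then (-1/24) * x$1 * y$7 + (-1/24) * x$7 * y$1 else if k = 4 then (1/12) * x$1 * y$6 + (-1/12) * x$2 * y$7 + (1/12) * x$6 * y$1 + (-1/12) * x$7 * y$2 else if k = 5 then (1/2) * x$1 * y$2 + (-1/6) * x$1 * y$6 + (-1/2) * x$2 * y$1 + (-1/12) * x$2 * y$7 + (-1/6) * x$6 * y$1 + (-1/12) * x$7 * y$2 else if k = 6 then (1/2) * x$1 * y$5 + (-1/2) * x$5 * y$1 else (1/2) * x$1 * y$3 + (1/2) * x$2 * y$4 + (1/2) * x$2 * y$5 + (-1/2) * x$3 * y$1 + (-1/2) * x$4 * y$2 + (-1/2) * x$5 * y$2)"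

lemma nab_1[simp]: "nab x y $ 1 = (1/12) * x$2 * y$4 + (1/6) * x$2 * y$5 + (1/24) * x$3 * y$7 + (1/12) * x$4 * y$2 + (1/6) * x$5 * y$2 + (1/24) * x$5 * y$6 + (1/24) * x$6 * y$5 + (1/24) * x$7 * y$3"
  by (simp add: nab_def)
lemma nab_2[simp]: "nab x y $ 2 = (-1/12) * x$1 * y$4 + (-1/6) * x$1 * y$5 + (-1/12) * x$4 * y$1 + (1/24) * x$4 * y$7 + (-1/6) * x$5 * y$1 + (1/24) * x$5 * y$7 + (1/24) * x$7 * y$4 + (1/24) * x$7 * y$5"
  by (simp add: nab_def)
lemma nab_3[simp]: "nab x y $ 3 = (-1/24) * x$1 * y$7 + (-1/24) * x$7 * y$1"
  by (simp add: nab_def)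
lemma nab_4[simp]: "nab x y $ 4 = (1/12) * x$1 * y$6 + (-1/12) * x$2 * y$7 + (1/12) * x$6 * y$1 + (-1/12) * x$7 * y$2"
  by (simp add: nab_def)
lemma nab_5[simp]: "nab x y $ 5 = (1/2) * x$1 * y$2 + (-1/6) * x$1 * y$6 + (-1/2) * x$2 * y$1 + (-1/12) * x$2 * y$7 + (-1/6) * x$6 * y$1 + (-1/12) * x$7 * y$2"
  by (simp add: nab_def)
lemma nab_6[simp]: "nab x y $ 6 = (1/2) * x$1 * y$5 + (-1/2) * x$5 * y$1"
  by (simp add: nab_def)
lemma nab_7[simp]: "nab x y $ 7 = (1/2) * x$1 * y$3 + (1/2) * x$2 * y$4 + (1/2) * x$2 * y$5 + (-1/2) * x$3 * y$1 + (-1/2) * x$4 * y$2 + (-1/2) * x$5 * y$2"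
  by (simp add: nab_def)

lemma koszul: "2 * gg (nab X Y) Z = gg (n7_bracket X Y) Z - gg (n7_bracket Y Z) X + gg (n7_bracket Z X) Y"
  by (simp add: gg_def algebra_simps)

lemma gg_sym: "gg x y = gg y x" by (simp add: gg_def algebra_simps)

lemma gg_bilinear: "bilinear gg"
  unfolding bilinear_def
  by (auto intro!: linearI simp: gg_def algebra_simps)

lemma gg_expand: "gg x x = 12 * ((x$1)^2 + (x$2)^2 + (x$3)^2) + (2 * x$4 + x$5)^2 + 3 * (x$5)^2 + (x$6)^2 + (x$7)^2"
  by (simp add: gg_def power2_eq_square algebra_simps)

lemma aux7: fixes a b c d e f g :: real
  assumes "a \<ge> 0" "b \<ge> 0" "c \<ge> 0" "d \<ge> 0" "e \<ge> 0" "f \<ge> 0" "g \<ge> 0"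
    "12 * (a + b + c) + d + 3 * e + f + g \<le> 0"
  shows "a = 0 \<and> b = 0 \<and> c = 0 \<and> d = 0 \<and> e = 0 \<and> f = 0 \<and> g = 0"
  using assms by argo

lemma gg_pos: assumes "x \<noteq> 0" shows "gg x x > 0"
proof (rule ccontr)
  assume "\<not> gg x x > 0"
  hence h: "12 * ((x$1)^2 + (x$2)^2 + (x$3)^2) + (2 * x$4 + x$5)^2 + 3 * (x$5)^2 + (x$6)^2 + (x$7)^2 \<le> 0"
    using gg_expand by simp
  have nn: "(x$1)^2 \<ge> 0" "(x$2)^2 \<ge> 0" "(x$3)^2 \<ge> 0" "(2 * x$4 + x$5)^2 \<ge> 0" "(x$5)^2 \<ge> 0" "(x$6)^2 \<ge> 0" "(x$7)^2 \<ge> 0"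
    by simp_all
  have z: "(x$1)^2 = 0 \<and> (x$2)^2 = 0 \<and> (x$3)^2 = 0 \<and> (2 * x$4 + x$5)^2 = 0 \<and> (x$5)^2 = 0 \<and> (x$6)^2 = 0 \<and> (x$7)^2 = 0"
    using aux7[OF nn h] .
  have z1: "(x$1)^2 = 0" and z2: "(x$2)^2 = 0" and z3: "(x$3)^2 = 0" and z4: "(2 * x$4 + x$5)^2 = 0"
    and z5: "(x$5)^2 = 0" and z6: "(x$6)^2 = 0" and z7: "(x$7)^2 = 0" using z by auto
  have "x$1 = 0" "x$2 = 0" "x$3 = 0" "x$4 = 0" "x$5 = 0" "x$6 = 0" "x$7 = 0" using z1 z2 z3 z4 z5 z6 z7 by simp_all
  hence "x = 0" by (simp add: vec_eq_iff forall_7)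
  with assms show False by simp
qed

lemma gg_ip: "inner_product_on gg"
  unfolding inner_product_on_def using gg_bilinear gg_sym gg_pos by blast

lemma gg_uniq: assumes "\<forall>Z. gg V Z = gg W Z" shows "V = W"
proof -
  have "gg (V - W) (V - W) = gg V (V - W) - gg W (V - W)" by (simp add: gg_def algebra_simps)
  hence "gg (V - W) (V - W) = 0" using assms by simp
  hence "V - W = 0" using gg_pos by fastforce
  thus ?thesis by simp
qed

lemma lc_eq: "lc_conn n7_bracket gg X Y = nab X Y"
  unfolding lc_conn_def
proof (rule the_equality)
  show "\<forall>Z. 2 * gg (nab X Y) Z = gg (n7_bracket X Y) Z - gg (n7_bracket Y Z) X + gg (n7_bracket Z X) Y"
    using koszul by blast
next
  fix V assume "\<forall>Z. 2 * gg V Z = gg (n7_bracket X Y) Z - gg (n7_bracket Y Z) X + gg (n7_bracket Z X) Y"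
  hence "\<forall>Z. gg V Z = gg (nab X Y) Z" using koszul by (metis mult_cancel_left zero_neq_numeral)
  thus "V = nab X Y" by (rule gg_uniq)
qed

definition rop :: "real^7 \<Rightarrow> real^7" where
  "rop x = (\<chi> k. if k = 1 then (-9/288) * x$1 else if k = 2 then (-8/288) * x$2 else if k = 3 then (-1/288) * x$3
     else if k = 4 then (-2/288) * x$4 else if k = 5 then (-2/288) * x$5 else if k = 6 then (4/288) * x$6 else (5/288) * x$7)"

definition dd :: "real^7 \<Rightarrow> real^7" where
  "dd x = (\<chi> k. if k = 1 then (6/288) * x$1 else if k = 2 then (7/288) * x$2 else if k = 3 then (14/288) * x$3
     else if k = 4 then (13/288) * x$4 else if k = 5 then (13/288) * x$5 else if k = 6 then (19/288) * x$6 else (20/288) * x$7)"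

lemma ric_eq: "ric_tensor n7_bracket gg X Y = gg (rop X) Y"
  unfolding ric_tensor_def curv_def lc_eq sum_7
  by (simp add: axis_def gg_def rop_def algebra_simps)

lemma ricop_eq: "ricci_op n7_bracket gg X = rop X"
  unfolding ricci_op_def
proof (rule the_equality)
  show "\<forall>Y. gg (rop X) Y = ric_tensor n7_bracket gg X Y" using ric_eq by simp
next
  fix V assume "\<forall>Y. gg V Y = ric_tensor n7_bracket gg X Y"
  hence "\<forall>Y. gg V Y = gg (rop X) Y" using ric_eq by simp
  thus "V = rop X" by (rule gg_uniq)
qed

lemma dd_der: "is_derivation n7_bracket dd"
  unfolding is_derivation_def
proof
  show "linear dd" by (rule linearI) (simp_all add: dd_def vec_eq_iff algebra_simps)
  show "\<forall>x y. dd (n7_bracket x y) = n7_bracket (dd x) y + n7_bracket x (dd y)"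
    by (simp add: vec_eq_iff forall_7 dd_def algebra_simps)
qed

theorem mainTheorem16:
  shows "einstein_nilradical n7_bracket"
proof -
  have "\<forall>X. ricci_op n7_bracket gg X = (-15/288) *\<^sub>R X + dd X"
    by (simp add: ricop_eq rop_def dd_def vec_eq_iff forall_7 algebra_simps)
  hence "nilsoliton n7_bracket gg" unfolding nilsoliton_def using dd_der by blast
  thus ?thesis unfolding einstein_nilradical_def using gg_ip by blast
qed

end
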